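(* For every metric space $(X,d)$, the upper Vietoris topology and the Scott topology on $\mathsf{K}((X,d))$ coincide.
   Context: For a metric space, $\mathsf{K}(X)$ is the set of nonempty compact subsets, ordered by reverse inclusion. Scott topology on a poset: upper sets $U$ such that every directed $D$ whose supremum exists and lies in $U$ meets $U$ (a family in $\mathsf{K}(X)$ has a supremum iff its intersection lies in $\mathsf{K}(X)$, and then it is the intersection). Upper Vietoris topology: base $\Box U=\{K:K\subseteq U\}$, $U$ open. *)

theory Defs
  imports "HOL-Analysis.Analysis"
begin

text \<open>K(X): nonempty compact subsets of the space, ordered by reverse inclusion
  (A \<le> B iff B \<subseteq> A).\<close>
definition Kspace :: "'a topology \<Rightarrow> 'a set set" where
  "Kspace X = {K. compactin X K \<and> K \<noteq> {}}"

definition Kle :: "'a set \<Rightarrow> 'a set \<Rightarrow> bool" where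
  "Kle A B \<longleftrightarrow> B \<subseteq> A"

definition K_upper :: "'a topology \<Rightarrow> 'a set set \<Rightarrow> bool" where
  "K_upper X U \<longleftrightarrow> U \<subseteq> Kspace X \<and> (\<forall>A\<in>U. \<forall>B\<in>Kspace X. Kle A B \<longrightarrow> B \<in> U)"

definition K_directed :: "'a topology \<Rightarrow> 'a set set \<Rightarrow> bool" where
  "K_directed X D \<longleftrightarrow> D \<subseteq> Kspace X \<and> D \<noteq> {} \<and>
     (\<forall>A\<in>D. \<forall>B\<in>D. \<exists>C\<in>D. Kle A C \<and> Kle B C)"

definition K_is_sup :: "'a topology \<Rightarrow> 'a set set \<Rightarrow> 'a set \<Rightarrow> bool" where
  "K_is_sup X D s \<longleftrightarrow> s \<in> Kspace X \<and> (\<forall>A\<in>D. Kle A s) \<and>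
     (\<forall>t\<in>Kspace X. (\<forall>A\<in>D. Kle A t) \<longrightarrow> Kle s t)"

definition scott_open :: "'a topology \<Rightarrow> 'a set set \<Rightarrow> bool" where
  "scott_open X U \<longleftrightarrow> K_upper X U \<and>
     (\<forall>D s. K_directed X D \<and> K_is_sup X D s \<and> s \<in> U \<longrightarrow> D \<inter> U \<noteq> {})"

definition vbox :: "'a topology \<Rightarrow> 'a set \<Rightarrow> 'a set set" where
  "vbox X V = {K \<in> Kspace X. K \<subseteq> V}"

definition upper_vietoris_open :: "'a topology \<Rightarrow> 'a set set \<Rightarrow> bool" where
  "upper_vietoris_open X U \<longleftrightarrow>
     (\<exists>\<V>. \<V> \<subseteq> {vbox X V | V. openin X V} \<and> U = \<Union>\<V>)"

end

theory Submission
  imports Defs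
begin

lemma directed_lower:
  assumes "K_directed X D" "finite F" "F \<subseteq> D"
  shows "\<exists>C\<in>D. \<forall>A\<in>F. C \<subseteq> A"
  using assms(2,3)
proof (induction F rule: finite_induct)
  case empty
  then show ?case using assms(1) unfolding K_directed_def by blast
next
  case (insert x F)
  then obtain C where C: "C \<in> D" "\<forall>A\<in>F. C \<subseteq> A" by auto
  with insert assms(1) obtain E where "E \<in> D" "E \<subseteq> x" "E \<subseteq> C"
    unfolding K_directed_def Kle_def by blast
  then show ?case using C by blast
qed

context Metric_space
begin

lemma dir_inside_open:
  assumes dir: "K_directed mtopology D" and sup: "K_is_sup mtopology D s"
    and V: "openin mtopology V" and sV: "s \<subseteq> V"
  shows "\<exists>A\<in>D. A \<subseteq> V"
proof -
  have Dc: "\<And>A. A \<in> D \<Longrightarrow> compactin mtopology A"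
    using dir unfolding K_directed_def Kspace_def by blast
  have Dcl: "\<And>A. A \<in> D \<Longrightarrow> closedin mtopology A"
    using Dc compactin_imp_closedin Hausdorff_space_mtopology by blast
  obtain A0 where A0: "A0 \<in> D" using dir unfolding K_directed_def by blast
  have IV: "\<Inter>D \<subseteq> V"
  proof (cases "\<Inter>D = {}")
    case True then show ?thesis by simp
  next
    case False
    have "compactin mtopology (\<Inter>D)"
      using closed_compactin_Inter[OF Dc[OF A0] A0 Dcl] .
    then have "\<Inter>D \<in> Kspace mtopology" using False unfolding Kspace_def by blast
    moreover have "\<forall>A\<in>D. Kle A (\<Inter>D)" unfolding Kle_def by blast
    ultimately have "Kle s (\<Inter>D)" using sup unfolding K_is_sup_def by blast
    then show ?thesis using sV unfolding Kle_def by blast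
  qed
  have cV: "compactin mtopology (A0 \<inter> (M - V))"
    using compact_Int_closedin[OF Dc[OF A0]] V
    by (metis closedin_diff closedin_topspace topspace_mtopology)
  have opn: "\<forall>U\<in>(\<lambda>A. M - A) ` D. openin mtopology U"
    using Dcl by (auto simp: closedin_def)
  have cov: "A0 \<inter> (M - V) \<subseteq> \<Union>((\<lambda>A. M - A) ` D)"
    using IV by blast
  obtain F where F: "finite F" "F \<subseteq> (\<lambda>A. M - A) ` D" "A0 \<inter> (M - V) \<subseteq> \<Union>F"
    using cV opn cov unfolding compactin_def by meson
  then obtain G where G: "finite G" "G \<subseteq> D" "F = (\<lambda>A. M - A) ` G"
    by (meson finite_subset_image)
  obtain C where C: "C \<in> D" "\<forall>A\<in>insert A0 G. C \<subseteq> A"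
    using directed_lower[OF dir, of "insert A0 G"] G A0 by auto
  have "C \<subseteq> V"
  proof
    fix x assume x: "x \<in> C"
    then have "x \<in> A0" "x \<in> M" using C Dc[OF A0] compactin_subset_topspace by fastforce+
    show "x \<in> V"
    proof (rule ccontr)
      assume "x \<notin> V"
      then have "x \<in> \<Union>F" using F \<open>x \<in> A0\<close> \<open>x \<in> M\<close> by blast
      then obtain A where "A \<in> G" "x \<notin> A" using G by blast
      then show False using C x by blast
    qed
  qed
  then show ?thesis using C by blast
qed

lemma nbhd_inside:
  assumes K: "compactin mtopology K" and W: "openin mtopology W" and KW: "K \<subseteq> W"
  shows "\<exists>N. (\<Union>k\<in>K. mball k (1 / real (Suc N))) \<subseteq> W"
proof (cases "K = {}")
  case True then show ?thesis by simp
next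
  case False
  have "\<forall>k\<in>K. \<exists>r>0. mball k r \<subseteq> W" using W KW unfolding openin_mtopology by blast
  then obtain r where r: "\<And>k. k \<in> K \<Longrightarrow> r k > 0 \<and> mball k (r k) \<subseteq> W" by metis
  have KM: "K \<subseteq> M" using K compactin_subset_topspace by fastforce
  have opn: "\<forall>U\<in>(\<lambda>k. mball k (r k / 2)) ` K. openin mtopology U" by auto
  have cov: "K \<subseteq> \<Union>((\<lambda>k. mball k (r k / 2)) ` K)"
  proof
    fix x assume "x \<in> K" then show "x \<in> \<Union>((\<lambda>k. mball k (r k / 2)) ` K)"
    proof
      show "x \<in> mball x (r x / 2)" using r[of x] KM \<open>x \<in> K\<close> by auto
    qed
  qed
  obtain F where F: "finite F" "F \<subseteq> (\<lambda>k. mball k (r k / 2)) ` K" "K \<subseteq> \<Union>F"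
    using K opn cov unfolding compactin_def by meson
  then obtain G where G: "finite G" "G \<subseteq> K" "F = (\<lambda>k. mball k (r k / 2)) ` G"
    by (meson finite_subset_image)
  have Gne: "G \<noteq> {}" using G F False by auto
  define e where "e = Min ((\<lambda>k. r k / 2) ` G)"
  have epos: "e > 0" unfolding e_def using G Gne r by auto
  have ele: "e \<le> r g / 2" if "g \<in> G" for g
    unfolding e_def by (rule Min_le) (use G that in auto)
  obtain N where N: "inverse (real (Suc N)) < e" using reals_Archimedean[OF epos] by auto
  have "(\<Union>k\<in>K. mball k (1 / real (Suc N))) \<subseteq> W"
  proof
    fix x assume "x \<in> (\<Union>k\<in>K. mball k (1 / real (Suc N)))"
    then obtain k where k: "k \<in> K" "x \<in> M" "d k x < 1 / real (Suc N)" using KM by auto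
    then obtain g where g: "g \<in> G" "k \<in> mball g (r g / 2)" using F G by blast
    have "d g x \<le> d g k + d k x" using g k KM by (meson in_mball triangle)
    also have "\<dots> < r g / 2 + e" using g k N by (simp add: inverse_eq_divide)
    also have "\<dots> \<le> r g" using ele[OF g(1)] by simp
    finally have "x \<in> mball g (r g)" using g k by auto
    then show "x \<in> W" using r g G by blast
  qed
  then show ?thesis by blast
qed

lemma scott_nbhd:
  assumes U: "scott_open mtopology U" and KU: "K \<in> U"
  shows "\<exists>n. vbox mtopology (\<Union>k\<in>K. mball k (1 / real (Suc n))) \<subseteq> U"
proof (rule ccontr)
  define nb where "nb n = (\<Union>k\<in>K. mball k (1 / real (Suc n)))" for n
  assume "\<not> ?thesis"
  then have "\<forall>n. \<exists>C. C \<in> vbox mtopology (nb n) \<and> C \<notin> U" unfolding nb_def by blast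
  then obtain Kn where Kn: "\<And>n. Kn n \<in> vbox mtopology (nb n) \<and> Kn n \<notin> U" by metis
  have Uup: "K_upper mtopology U" using U unfolding scott_open_def by blast
  have KK: "K \<in> Kspace mtopology" using Uup KU unfolding K_upper_def by blast
  then have Kc: "compactin mtopology K" and Kne: "K \<noteq> {}" unfolding Kspace_def by auto
  have KM: "K \<subseteq> M" using Kc compactin_subset_topspace by fastforce
  have Knc: "compactin mtopology (Kn n)" and Knne: "Kn n \<noteq> {}" and Knb: "Kn n \<subseteq> nb n" for n
    using Kn[of n] unfolding vbox_def Kspace_def by auto
  have Knsp: "Kn n \<in> Kspace mtopology" for n using Knc Knne unfolding Kspace_def by auto
  have nbmono: "nb m \<subseteq> nb n" if "n \<le> m" for n m
  proof -
    have "1 / real (Suc m) \<le> 1 / real (Suc n)" using that by (simp add: frac_le)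
    then show ?thesis unfolding nb_def by fastforce
  qed
  define L where "L n = K \<union> \<Union>(Kn ` {n..})" for n
  have LM: "L n \<subseteq> M" for n
    unfolding L_def using KM Knc compactin_subset_topspace by fastforce
  have Lc: "compactin mtopology (L n)" for n
    unfolding compactin_def
  proof (intro conjI allI impI)
    show "L n \<subseteq> topspace mtopology" using LM by simp
  next
    fix \<U> assume \<U>: "Ball \<U> (openin mtopology) \<and> L n \<subseteq> \<Union>\<U>"
    have "K \<subseteq> \<Union>\<U>" using \<U> unfolding L_def by blast
    then obtain F0 where F0: "finite F0" "F0 \<subseteq> \<U>" "K \<subseteq> \<Union>F0"
      using Kc \<U> unfolding compactin_def by meson
    have "openin mtopology (\<Union>F0)" using F0 \<U> by auto
    then obtain N where N: "nb N \<subseteq> \<Union>F0" using nbhd_inside[OF Kc _ F0(3)] unfolding nb_def by blast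
    define S where "S = K \<union> \<Union>(Kn ` {n..<N})"
    have Sc: "compactin mtopology S" unfolding S_def
      by (intro compactin_Un Kc compactin_Union) (auto intro: Knc)
    have "S \<subseteq> L n" unfolding S_def L_def by auto
    then have "S \<subseteq> \<Union>\<U>" using \<U> by blast
    then obtain F1 where F1: "finite F1" "F1 \<subseteq> \<U>" "S \<subseteq> \<Union>F1"
      using Sc \<U> unfolding compactin_def by meson
    have "L n \<subseteq> \<Union>(F0 \<union> F1)"
    proof
      fix x assume "x \<in> L n"
      then consider "x \<in> K" | m where "m \<ge> n" "x \<in> Kn m" unfolding L_def by auto
      then show "x \<in> \<Union>(F0 \<union> F1)"
      proof cases
        case 1 then show ?thesis using F0 by blast
      next
        case 2
        show ?thesis
        proof (cases "m < N")
          case True then have "x \<in> S" using 2 unfolding S_def by auto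
          then show ?thesis using F1 by blast
        next
          case False then have "x \<in> nb N" using nbmono[of N m] Knb[of m] 2 by auto
          then show ?thesis using N by blast
        qed
      qed
    qed
    then show "\<exists>\<F>. finite \<F> \<and> \<F> \<subseteq> \<U> \<and> L n \<subseteq> \<Union>\<F>"
      using F0 F1 by (intro exI[of _ "F0 \<union> F1"]) auto
  qed
  have Lsp: "L n \<in> Kspace mtopology" for n using Lc Kne unfolding Kspace_def L_def by auto
  have dir: "K_directed mtopology (range L)"
    unfolding K_directed_def
  proof (intro conjI ballI)
    show "range L \<subseteq> Kspace mtopology" using Lsp by auto
    show "range L \<noteq> {}" by auto
  next
    fix A B assume "A \<in> range L" "B \<in> range L"
    then obtain a b where ab: "A = L a" "B = L b" by auto
    have "L (max a b) \<subseteq> A" "L (max a b) \<subseteq> B" unfolding ab L_def by auto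
    then show "\<exists>C\<in>range L. Kle A C \<and> Kle B C" unfolding Kle_def by blast
  qed
  have Kcl: "closedin mtopology K" using Kc compactin_imp_closedin Hausdorff_space_mtopology by blast
  have sup: "K_is_sup mtopology (range L) K"
    unfolding K_is_sup_def
  proof (intro conjI ballI impI)
    show "K \<in> Kspace mtopology" by (rule KK)
  next
    fix A assume "A \<in> range L" then show "Kle A K" unfolding Kle_def L_def by auto
  next
    fix t assume t: "t \<in> Kspace mtopology" and ub: "\<forall>A\<in>range L. Kle A t"
    have tM: "t \<subseteq> M" using t unfolding Kspace_def using compactin_subset_topspace by fastforce
    show "Kle K t" unfolding Kle_def
    proof
      fix x assume xt: "x \<in> t"
      show "x \<in> K"
      proof (rule ccontr)
        assume xK: "x \<notin> K"
        have "openin mtopology (M - K)" using Kcl by (simp add: closedin_def)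
        then obtain r where r: "r > 0" "mball x r \<subseteq> M - K"
          using xK xt tM unfolding openin_mtopology by blast
        obtain n where n: "inverse (real (Suc n)) < r" using reals_Archimedean[OF r(1)] by auto
        have "x \<in> L n" using ub xt unfolding Kle_def by blast
        then obtain m where m: "m \<ge> n" "x \<in> Kn m" using xK unfolding L_def by auto
        then have "x \<in> nb n" using nbmono[of n m] Knb[of m] by auto
        then obtain k where k: "k \<in> K" "d k x < 1 / real (Suc n)" unfolding nb_def by auto
        have "d x k < r" using k n KM xt tM commute[of x k] by (simp add: inverse_eq_divide)
        then have "k \<in> mball x r" using k KM xt tM by auto
        then show False using r k by blast
      qed
    qed
  qed
  have "range L \<inter> U \<noteq> {}" using U dir sup KU unfolding scott_open_def by blast
  then obtain n where "L n \<in> U" by auto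
  moreover have "Kle (L n) (Kn n)" unfolding Kle_def L_def by auto
  ultimately have "Kn n \<in> U" using Uup Knsp unfolding K_upper_def by blast
  then show False using Kn by blast
qed

end

theorem mainTheorem14:
  fixes M :: "'a set" and d :: "'a \<Rightarrow> 'a \<Rightarrow> real"
  assumes "Metric_space M d"
  shows "{U. upper_vietoris_open (Metric_space.mtopology M d) U}
       = {U. scott_open (Metric_space.mtopology M d) U}"
proof -
  interpret Metric_space M d by fact
  have 1: "scott_open mtopology U" if UV: "upper_vietoris_open mtopology U" for U
  proof -
    have "\<exists>\<V>. \<V> \<subseteq> {vbox mtopology V | V. openin mtopology V} \<and> U = \<Union>\<V>"
      using UV by (simp only: upper_vietoris_open_def)
    then obtain \<V> where V: "\<V> \<subseteq> {vbox mtopology V | V. openin mtopology V}" "U = \<Union>\<V>"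
      by (elim exE conjE) (rule that)
    have Vmem: "\<exists>W. A \<in> vbox mtopology W \<and> vbox mtopology W \<in> \<V> \<and> openin mtopology W"
      if AU: "A \<in> U" for A
    proof -
      obtain B0 where B0: "B0 \<in> \<V>" "A \<in> B0" using AU V(2) by blast
      then obtain W where "B0 = vbox mtopology W" "openin mtopology W" using V(1) by blast
      then show ?thesis using B0 by blast
    qed
    have up: "K_upper mtopology U"
      unfolding K_upper_def
    proof (intro conjI ballI impI)
      show "U \<subseteq> Kspace mtopology"
      proof
        fix A assume "A \<in> U"
        then obtain W where "A \<in> vbox mtopology W" using Vmem by blast
        then show "A \<in> Kspace mtopology" by (simp add: vbox_def)
      qed
    next
      fix A B assume A: "A \<in> U" and B: "B \<in> Kspace mtopology" and AB: "Kle A B"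
      then obtain W where W: "A \<in> vbox mtopology W" "vbox mtopology W \<in> \<V>" using Vmem by blast
      then have "B \<subseteq> W" using AB unfolding vbox_def Kle_def by auto
      then have "B \<in> vbox mtopology W" using B unfolding vbox_def by simp
      then show "B \<in> U" using V(2) W(2) by blast
    qed
    show ?thesis unfolding scott_open_def
    proof (intro conjI allI impI up)
      fix D s assume H: "K_directed mtopology D \<and> K_is_sup mtopology D s \<and> s \<in> U"
      then obtain W where W: "s \<in> vbox mtopology W" "vbox mtopology W \<in> \<V>" "openin mtopology W"
        using Vmem by blast
      have "s \<subseteq> W" using W(1) by (simp add: vbox_def)
      then obtain A where A: "A \<in> D" "A \<subseteq> W" using dir_inside_open[OF _ _ W(3)] H by blast
      then have "A \<in> Kspace mtopology" using H unfolding K_directed_def by blast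
      then have "A \<in> vbox mtopology W" using A by (simp add: vbox_def)
      then have "A \<in> U" using V(2) W(2) by blast
      then show "D \<inter> U \<noteq> {}" using A by blast
    qed
  qed
  have 2: "upper_vietoris_open mtopology U" if U: "scott_open mtopology U" for U
  proof -
    define \<V> where "\<V> = {B. B \<in> {vbox mtopology V | V. openin mtopology V} \<and> B \<subseteq> U}"
    have "U = \<Union>\<V>"
    proof
      show "\<Union>\<V> \<subseteq> U" unfolding \<V>_def by blast
    next
      show "U \<subseteq> \<Union>\<V>"
      proof
        fix K assume KU: "K \<in> U"
        have "K_upper mtopology U" using U by (simp add: scott_open_def)
        then have "U \<subseteq> Kspace mtopology" by (simp add: K_upper_def)
        then have KK: "K \<in> Kspace mtopology" using KU by blast
        then have KM: "K \<subseteq> M" unfolding Kspace_def using compactin_subset_topspace by fastforce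
        obtain n where n: "vbox mtopology (\<Union>k\<in>K. mball k (1 / real (Suc n))) \<subseteq> U"
          using scott_nbhd[OF U KU] by blast
        have op: "openin mtopology (\<Union>k\<in>K. mball k (1 / real (Suc n)))"
          by (intro openin_Union) auto
        have "K \<subseteq> (\<Union>k\<in>K. mball k (1 / real (Suc n)))"
        proof
          fix x assume "x \<in> K"
          then show "x \<in> (\<Union>k\<in>K. mball k (1 / real (Suc n)))"
            using KM by (intro UN_I[of x]) auto
        qed
        then have "K \<in> vbox mtopology (\<Union>k\<in>K. mball k (1 / real (Suc n)))"
          using KK unfolding vbox_def by auto
        moreover have "vbox mtopology (\<Union>k\<in>K. mball k (1 / real (Suc n))) \<in> \<V>"
          unfolding \<V>_def using op n by blast
        ultimately show "K \<in> \<Union>\<V>" by blast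
      qed
    qed
    moreover have "\<V> \<subseteq> {vbox mtopology V | V. openin mtopology V}" unfolding \<V>_def by blast
    ultimately show ?thesis unfolding upper_vietoris_open_def by (intro exI[of _ \<V>] conjI)
  qed
  show ?thesis
  proof (rule set_eqI, unfold mem_Collect_eq)
    fix U
    show "upper_vietoris_open mtopology U \<longleftrightarrow> scott_open mtopology U"
    proof
      assume "upper_vietoris_open mtopology U" then show "scott_open mtopology U" by (rule 1)
    next
      assume "scott_open mtopology U" then show "upper_vietoris_open mtopology U" by (rule 2)
    qed
  qed
qed

end
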